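(* Let $G$ be an $(n,n,p_s,p_d)$-two-island network with groups $V_1,V_2$, and let the implicit opinions $x_i(t)$ and explicit opinions $y_i(t)$ evolve according to the dual opinions dynamics described in the context, with common bias parameter $b>0$, common resilience $\phi\in(0,1)$, and the symmetric initial condition $x_i(0)=x_0\in(\tfrac12,1)$, $y_i(0)=y_0\in[\tfrac12,x_0]$ for $i\in V_1$ and $x_j(0)=1-x_0$, $y_j(0)=1-y_0$ for $j\in V_2$. Then for any two individuals $i,j$ in the same group, $x_i(t)=x_j(t)$ and $y_i(t)=y_j(t)$ for all $t\ge 0$. Moreover, for $i\in V_1$ and $j\in V_2$ and every $t>0$: $x_i(t)+x_j(t)=y_i(t)+y_j(t)=1$, $x_i(t)>y_i(t)>\tfrac12$, and $x_j(t)<y_j(t)<\tfrac12$.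
   Context: Let $n\ge 1$ and $p_s,p_d\in(0,1)$ with $p_s>p_d$ and $np_s,np_d$ positive integers. An $(n,n,p_s,p_d)$-two-island network is an undirected graph (no self-loops) with vertex set $V=V_1\cup V_2$, $V_1\cap V_2=\emptyset$, $|V_1|=|V_2|=n$, such that each node of $V_1$ has exactly $np_s$ neighbours in $V_1$ and $np_d$ neighbours in $V_2$, and each node of $V_2$ has exactly $np_s$ neighbours in $V_2$ and $np_d$ neighbours in $V_1$. Its degree of homophily is $h_G=p_s/p_d>1$. Let $w_{ij}\in\{0,1\}$ be the adjacency matrix, $N_i$ the set of neighbours of $i$, and $d_i=\sum_{j\in N_i}w_{ij}$. Dual opinions dynamics: each individual $i\in V$ has an implicit opinion $x_i(t)\in[0,1]$ and an explicit opinion $y_i(t)\in[0,1]$, $t=0,1,2,\dots$, updated by $$x_i(t+1)=\frac{x_i(t)^{b}s_i(t)}{x_i(t)^{b}s_i(t)+(1-x_i(t))^{b}(d_i-s_i(t))},\qquad y_i(t+1)=\phi\, x_i(t+1)+(1-\phi)\hat y_{i,avg}(t),$$ where $s_i(t)=\sum_{j\in N_i}w_{ij}y_j(t)$ and $\hat y_{i,avg}(t)=\sum_{j\in N_i}\frac{w_{ij}}{d_i}y_j(t)$. *)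

theory Defs
  imports Complex_Main
begin

text \<open>Undirected simple graph on vertex set V1 \<union> V2 given by an adjacency
relation E (w_ij = 1 iff E i j).\<close>

definition nbrs :: "('a \<Rightarrow> 'a \<Rightarrow> bool) \<Rightarrow> 'a set \<Rightarrow> 'a \<Rightarrow> 'a set" where
  "nbrs E V i = {j \<in> V. E i j}"

definition two_island_network ::
  "nat \<Rightarrow> real \<Rightarrow> real \<Rightarrow> 'a set \<Rightarrow> 'a set \<Rightarrow> ('a \<Rightarrow> 'a \<Rightarrow> bool) \<Rightarrow> bool" where
  "two_island_network n ps pd V1 V2 E \<longleftrightarrow>
     n \<ge> 1 \<and> 0 < pd \<and> pd < ps \<and> ps < 1 \<and>
     (\<exists>k::nat. k > 0 \<and> real n * ps = real k) \<and>
     (\<exists>k::nat. k > 0 \<and> real n * pd = real k) \<and>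
     finite V1 \<and> finite V2 \<and> V1 \<inter> V2 = {} \<and> card V1 = n \<and> card V2 = n \<and>
     (\<forall>i j. E i j \<longrightarrow> i \<in> V1 \<union> V2 \<and> j \<in> V1 \<union> V2) \<and>
     (\<forall>i j. E i j \<longrightarrow> E j i) \<and>
     (\<forall>i. \<not> E i i) \<and>
     (\<forall>i\<in>V1. real (card (nbrs E V1 i)) = real n * ps \<and>
               real (card (nbrs E V2 i)) = real n * pd) \<and>
     (\<forall>i\<in>V2. real (card (nbrs E V2 i)) = real n * ps \<and>
               real (card (nbrs E V1 i)) = real n * pd)"

definition dual_opinions_dynamics ::
  "real \<Rightarrow> real \<Rightarrow> 'a set \<Rightarrow> ('a \<Rightarrow> 'a \<Rightarrow> bool) \<Rightarrow>
   (nat \<Rightarrow> 'a \<Rightarrow> real) \<Rightarrow> (nat \<Rightarrow> 'a \<Rightarrow> real) \<Rightarrow> bool" where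
  "dual_opinions_dynamics b \<phi> V E x y \<longleftrightarrow>
     (\<forall>t. \<forall>i\<in>V.
        (let d = real (card (nbrs E V i));
             s = (\<Sum>j\<in>nbrs E V i. y t j);
             yavg = (\<Sum>j\<in>nbrs E V i. y t j / d)
         in x (Suc t) i = (x t i powr b * s) /
                            (x t i powr b * s + (1 - x t i) powr b * (d - s))
          \<and> y (Suc t) i = \<phi> * x (Suc t) i + (1 - \<phi>) * yavg))"

end

theory Submission
  imports Defs
begin

lemma keyineq:
  fixes P Q s e :: real
  assumes "0 < Q" "Q < P" "0 < e" "e \<le> s"
  shows "P*s/(P*s+Q*e) > s/(s+e)" "P*s/(P*s+Q*e) > 1/2" "P*s/(P*s+Q*e) < 1"
    "Q*e/(Q*e+P*s) = 1 - P*s/(P*s+Q*e)"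
proof -
  have Qe: "Q*e > 0" using assms by simp
  have Ps: "P*s > 0" using assms by simp
  have D: "P*s+Q*e>0" "s+e>0" using Qe Ps assms by linarith+
  have "P*s*(s+e) > s*(P*s+Q*e)"
  proof -
    have "P*e > Q*e" using assms by simp
    hence "s*(P*e) > s*(Q*e)" using assms by simp
    thus ?thesis by (simp add: algebra_simps)
  qed
  thus "P*s/(P*s+Q*e) > s/(s+e)" using D by (simp add: divide_simps mult.commute)
  have "Q*e < P*e" using assms by simp
  also have "P*e \<le> P*s" using assms by simp
  finally have "P*s > Q*e" .
  thus "P*s/(P*s+Q*e) > 1/2" using D by (simp add: divide_simps)
  show "P*s/(P*s+Q*e) < 1" using D Qe by (simp add: divide_simps)
  show "Q*e/(Q*e+P*s) = 1 - P*s/(P*s+Q*e)" using D by (simp add: field_simps)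
qed

lemma nbrs_split:
  assumes "finite V1" "finite V2" "V1 \<inter> V2 = {}"
    "\<forall>j\<in>V1. f j = u" "\<forall>j\<in>V2. f j = v"
  shows "sum f (nbrs E (V1 \<union> V2) i) = real (card (nbrs E V1 i)) * u + real (card (nbrs E V2 i)) * v"
    "card (nbrs E (V1 \<union> V2) i) = card (nbrs E V1 i) + card (nbrs E V2 i)"
proof -
  have eq: "nbrs E (V1 \<union> V2) i = nbrs E V1 i \<union> nbrs E V2 i" by (auto simp: nbrs_def)
  have f1: "finite (nbrs E V1 i)" "finite (nbrs E V2 i)" using assms by (auto simp: nbrs_def)
  have dj: "nbrs E V1 i \<inter> nbrs E V2 i = {}" using assms(3) by (auto simp: nbrs_def)
  have s1: "sum f (nbrs E V1 i) = real (card (nbrs E V1 i)) * u"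
    using assms(4) by (simp add: nbrs_def)
  have s2: "sum f (nbrs E V2 i) = real (card (nbrs E V2 i)) * v"
    using assms(5) by (simp add: nbrs_def)
  show "sum f (nbrs E (V1 \<union> V2) i) = real (card (nbrs E V1 i)) * u + real (card (nbrs E V2 i)) * v"
    unfolding eq using f1 dj s1 s2 by (simp add: sum.union_disjoint)
  show "card (nbrs E (V1 \<union> V2) i) = card (nbrs E V1 i) + card (nbrs E V2 i)"
    unfolding eq using f1 dj by (simp add: card_Un_disjoint)
qed

theorem theorem1:
  fixes n :: nat and ps pd b \<phi> x0 y0 :: real
    and V1 V2 :: "'a set" and E :: "'a \<Rightarrow> 'a \<Rightarrow> bool"
    and x y :: "nat \<Rightarrow> 'a \<Rightarrow> real"
  assumes G: "two_island_network n ps pd V1 V2 E"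
    and b: "b > 0"
    and phi: "0 < \<phi>" "\<phi> < 1"
    and x0: "1/2 < x0" "x0 < 1"
    and y0: "1/2 \<le> y0" "y0 \<le> x0"
    and init1: "\<forall>i\<in>V1. x 0 i = x0 \<and> y 0 i = y0"
    and init2: "\<forall>j\<in>V2. x 0 j = 1 - x0 \<and> y 0 j = 1 - y0"
    and dyn: "dual_opinions_dynamics b \<phi> (V1 \<union> V2) E x y"
  shows "(\<forall>t. \<forall>i\<in>V1. \<forall>j\<in>V1. x t i = x t j \<and> y t i = y t j) \<and>
         (\<forall>t. \<forall>i\<in>V2. \<forall>j\<in>V2. x t i = x t j \<and> y t i = y t j) \<and>
         (\<forall>t>0. \<forall>i\<in>V1. \<forall>j\<in>V2.
             x t i + x t j = 1 \<and> y t i + y t j = 1 \<and>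
             x t i > y t i \<and> y t i > 1/2 \<and>
             x t j < y t j \<and> y t j < 1/2)"
proof -
  define A where "A = real n * ps"
  define C where "C = real n * pd"
  have fin: "finite V1" "finite V2" "V1 \<inter> V2 = {}" using G by (auto simp: two_island_network_def)
  have AC: "0 < C" "C < A"
  proof -
    have "n \<ge> 1" "0 < pd" "pd < ps" using G by (auto simp: two_island_network_def)
    then show "0 < C" "C < A" unfolding A_def C_def by auto
  qed
  have deg1: "\<forall>i\<in>V1. real (card (nbrs E V1 i)) = A \<and> real (card (nbrs E V2 i)) = C"
    using G by (auto simp: two_island_network_def A_def C_def)
  have deg2: "\<forall>i\<in>V2. real (card (nbrs E V2 i)) = A \<and> real (card (nbrs E V1 i)) = C"
    using G by (auto simp: two_island_network_def A_def C_def)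
  have inv: "\<exists>X Y. 1/2 < X \<and> X < 1 \<and> 1/2 \<le> Y \<and> Y \<le> X \<and>
      (\<forall>i\<in>V1. x t i = X \<and> y t i = Y) \<and> (\<forall>j\<in>V2. x t j = 1 - X \<and> y t j = 1 - Y) \<and>
      (t > 0 \<longrightarrow> 1/2 < Y \<and> Y < X)" for t
  proof (induction t)
    case 0
    then show ?case using x0 y0 init1 init2 by (intro exI[of _ x0] exI[of _ y0]) auto
  next
    case (Suc t)
    then obtain X Y where XY: "1/2 < X" "X < 1" "1/2 \<le> Y" "Y \<le> X"
      and on1: "\<forall>i\<in>V1. x t i = X \<and> y t i = Y" and on2: "\<forall>j\<in>V2. x t j = 1 - X \<and> y t j = 1 - Y"
      by blast
    define s where "s = A*Y + C*(1-Y)"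
    define e where "e = A*(1-Y) + C*Y"
    define P where "P = X powr b"
    define Q where "Q = (1-X) powr b"
    define X' where "X' = P*s/(P*s+Q*e)"
    define Y' where "Y' = \<phi>*X' + (1-\<phi>)*(s/(s+e))"
    have Q0: "0 < Q" unfolding Q_def using XY by simp
    have QP: "Q < P" unfolding Q_def P_def using XY b by (intro powr_less_mono2) auto
    have e0: "0 < e"
    proof -
      have "0 \<le> C*Y" using AC XY by simp
      moreover have "0 < A*(1-Y)" using AC XY by simp
      ultimately show ?thesis unfolding e_def by linarith
    qed
    have es: "e \<le> s"
    proof -
      have "s - e = (A - C)*(2*Y - 1)" unfolding s_def e_def by (simp add: algebra_simps)
      moreover have "0 \<le> (A - C)*(2*Y - 1)" using AC XY by simp
      ultimately show ?thesis by linarith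
    qed
    have sd: "s + e = A + C" unfolding s_def e_def by (simp add: algebra_simps)
    note K = keyineq[OF Q0 QP e0 es]
    have half: "s/(s+e) \<ge> 1/2" using e0 es by (simp add: divide_simps)
    have Y'X': "Y' < X'"
    proof -
      have "(1-\<phi>)*(s/(s+e)) < (1-\<phi>)*X'" using K(1) phi unfolding X'_def[symmetric] by (intro mult_strict_left_mono) auto
      thus ?thesis unfolding Y'_def by (simp add: algebra_simps)
    qed
    have Y'h: "1/2 < Y'"
    proof -
      have "(1-\<phi>)*(1/2) \<le> (1-\<phi>)*(s/(s+e))" using half phi by (intro mult_left_mono) auto
      moreover have "\<phi>*(1/2) < \<phi>*X'" using K(2) phi unfolding X'_def[symmetric] by (intro mult_strict_left_mono) auto
      ultimately show ?thesis unfolding Y'_def by (simp add: algebra_simps)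
    qed
    have S1: "x (Suc t) i = X' \<and> y (Suc t) i = Y'" if i: "i \<in> V1" for i
    proof -
      have sm: "(\<Sum>j\<in>nbrs E (V1 \<union> V2) i. y t j) = s"
        using nbrs_split(1)[OF fin, of "y t" Y "1 - Y" E i] on1 on2 deg1 i by (simp add: s_def)
      have cd: "real (card (nbrs E (V1 \<union> V2) i)) = s + e"
        using nbrs_split(2)[OF fin, of "y t" Y "1 - Y" E i] on1 on2 deg1 i sd by simp
      have ya: "(\<Sum>j\<in>nbrs E (V1 \<union> V2) i. y t j / real (card (nbrs E (V1 \<union> V2) i))) = s/(s+e)"
        using sm cd by (simp add: sum_divide_distrib[symmetric])
      have xi: "x t i = X" using on1 i by simp
      have "x (Suc t) i = X'"
        using dyn i sm cd xi unfolding dual_opinions_dynamics_def Let_def X'_def P_def Q_def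
        by auto
      moreover have "y (Suc t) i = Y'"
        using dyn i ya calculation unfolding dual_opinions_dynamics_def Let_def Y'_def
        by auto
      ultimately show ?thesis ..
    qed
    have S2: "x (Suc t) i = 1 - X' \<and> y (Suc t) i = 1 - Y'" if i: "i \<in> V2" for i
    proof -
      have sm: "(\<Sum>j\<in>nbrs E (V1 \<union> V2) i. y t j) = e"
        using nbrs_split(1)[OF fin, of "y t" Y "1 - Y" E i] on1 on2 deg2 i
        by (simp add: e_def algebra_simps)
      have cd: "real (card (nbrs E (V1 \<union> V2) i)) = s + e"
        using nbrs_split(2)[OF fin, of "y t" Y "1 - Y" E i] on1 on2 deg2 i sd by simp
      have ya: "(\<Sum>j\<in>nbrs E (V1 \<union> V2) i. y t j / real (card (nbrs E (V1 \<union> V2) i))) = e/(s+e)"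
        using sm cd by (simp add: sum_divide_distrib[symmetric])
      have xi: "x t i = 1 - X" using on2 i by simp
      have "x (Suc t) i = Q*e/(Q*e+P*s)"
        using dyn i sm cd xi unfolding dual_opinions_dynamics_def Let_def P_def Q_def
        by auto
      then have xx: "x (Suc t) i = 1 - X'" using K(4) unfolding X'_def by simp
      have ee: "e/(s+e) = 1 - s/(s+e)" using e0 es by (simp add: field_simps)
      have "y (Suc t) i = \<phi>*(1-X') + (1-\<phi>)*(e/(s+e))"
        using dyn i ya xx unfolding dual_opinions_dynamics_def Let_def
        by auto
      also have "\<dots> = 1 - Y'" unfolding Y'_def ee by (simp add: algebra_simps)
      finally show ?thesis using xx by simp
    qed
    show ?case
      apply (rule exI[of _ X'], rule exI[of _ Y'])
      using S1 S2 Y'X' Y'h K(2,3) unfolding X'_def by auto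
  qed
  show ?thesis
  proof (intro conjI allI impI ballI)
    fix t :: nat and i j assume "i \<in> V1" "j \<in> V1"
    then show "x t i = x t j" "y t i = y t j" using inv[of t] by auto
  next
    fix t :: nat and i j assume "i \<in> V2" "j \<in> V2"
    then show "x t i = x t j" "y t i = y t j" using inv[of t] by auto
  next
    fix t :: nat and i j assume t: "0 < t" and ij: "i \<in> V1" "j \<in> V2"
    from inv[of t] obtain X Y where XY: "1/2 < X" "X < 1" "1/2 \<le> Y" "Y \<le> X"
      and on1: "\<forall>i\<in>V1. x t i = X \<and> y t i = Y" and on2: "\<forall>j\<in>V2. x t j = 1 - X \<and> y t j = 1 - Y"
      and st: "t > 0 \<longrightarrow> 1/2 < Y \<and> Y < X" by blast
    show "x t i + x t j = 1" "y t i + y t j = 1" "x t i > y t i" "y t i > 1/2"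
      "x t j < y t j" "y t j < 1/2"
      using on1 on2 st t ij by auto
  qed
qed

end
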